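(* Let $A$ be an $M\times N$ matrix whose columns form a frame for $\mathcal{H}_M$ and let $c$ be a nonzero scalar. Then the columns of the $2M\times 2N$ matrix $$B=\begin{bmatrix}cA & cA\\ cA & -cA\end{bmatrix}$$ form a frame for $\mathcal{H}_{2M}$. Moreover, $B$ represents a tight frame if $A$ does, and $B$ represents an equal norm frame if $A$ does.
   Context: $\mathcal{H}_M$ denotes an $M$-dimensional Hilbert space, identified with $\mathbb{R}^M$ (or $\mathbb{C}^M$) via a fixed orthonormal basis. A family $\{f_i\}_{i=1}^N$ is a frame if there are $0<A\le B<\infty$ with $A\|f\|^2\le\sum_i|\langle f,f_i\rangle|^2\le B\|f\|^2$ for all $f$; tight if one can take $A=B$; equal norm if all $\|f_i\|$ are equal. A matrix represents a frame if its columns form one. *)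

theory Defs
  imports Complex_Main "Jordan_Normal_Form.Matrix"
begin

text \<open>H_M is identified with complex^M (vectors of dimension M) via the standard basis.
  A matrix represents a frame if its columns form one.\<close>

definition hinner :: "complex vec \<Rightarrow> complex vec \<Rightarrow> complex" where
  "hinner f g = (\<Sum>k<dim_vec f. f $ k * cnj (g $ k))"

definition hnorm_sq :: "complex vec \<Rightarrow> real" where
  "hnorm_sq f = (\<Sum>k<dim_vec f. (cmod (f $ k))^2)"

definition frame_sum :: "complex mat \<Rightarrow> complex vec \<Rightarrow> real" where
  "frame_sum A f = (\<Sum>i<dim_col A. (cmod (hinner f (col A i)))^2)"

definition is_frame :: "complex mat \<Rightarrow> bool" where
  "is_frame A \<longleftrightarrow> (\<exists>a b. 0 < a \<and> a \<le> b \<and>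
      (\<forall>f \<in> carrier_vec (dim_row A).
          a * hnorm_sq f \<le> frame_sum A f \<and> frame_sum A f \<le> b * hnorm_sq f))"

definition is_tight_frame :: "complex mat \<Rightarrow> bool" where
  "is_tight_frame A \<longleftrightarrow> (\<exists>a. 0 < a \<and>
      (\<forall>f \<in> carrier_vec (dim_row A). frame_sum A f = a * hnorm_sq f))"

definition is_equal_norm_frame :: "complex mat \<Rightarrow> bool" where
  "is_equal_norm_frame A \<longleftrightarrow> is_frame A \<and>
      (\<exists>r. \<forall>i<dim_col A. hnorm_sq (col A i) = r)"

end

theory Submission
  imports Defs
begin

lemma sum_split_add: "(\<Sum>k<a+(b::nat). g k) = (\<Sum>k<a. g k) + (\<Sum>k<b. g (a+k))"
  by (induction b) (simp_all add: add.assoc)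

lemma cmod_par: "(cmod (x+y))^2 + (cmod (x-y))^2 = 2*((cmod x)^2 + (cmod y)^2)"
  by (simp only: cmod_power2) (simp add: power2_eq_square algebra_simps)

lemma cmod_cnj_mult_sq: "(cmod (cnj c * z))^2 = (cmod c)^2 * (cmod z)^2"
  by (simp add: norm_mult power_mult_distrib)

lemma key:
  fixes A :: "complex mat" and c :: complex
  assumes A: "A \<in> carrier_mat M N" and f: "f \<in> carrier_vec (2*M)"
  defines "B \<equiv> four_block_mat (c \<cdot>\<^sub>m A) (c \<cdot>\<^sub>m A) (c \<cdot>\<^sub>m A) (- (c \<cdot>\<^sub>m A))"
  defines "u \<equiv> vec M (\<lambda>k. f $ k)" and "v \<equiv> vec M (\<lambda>k. f $ (M+k))"
  shows "hnorm_sq f = hnorm_sq u + hnorm_sq v"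
    and "frame_sum B f = (cmod c)^2 * (frame_sum A (u+v) + frame_sum A (u-v))"
    and "hnorm_sq (u+v) + hnorm_sq (u-v) = 2 * hnorm_sq f"
proof -
  have df: "dim_vec f = M + M" using f by auto
  show h1: "hnorm_sq f = hnorm_sq u + hnorm_sq v"
    unfolding hnorm_sq_def df sum_split_add u_def v_def by simp
  show "hnorm_sq (u+v) + hnorm_sq (u-v) = 2 * hnorm_sq f"
    unfolding h1 unfolding hnorm_sq_def u_def v_def
    by (simp add: sum.distrib[symmetric] cmod_par sum_distrib_left distrib_left)
  have dB: "dim_col B = N + N" "dim_row B = M + M" using A by (auto simp: B_def)
  have c1: "hinner f (col B j) = cnj c * hinner (u+v) (col A j)" if j: "j < N" for j
  proof -
    have "hinner f (col B j) = (\<Sum>k<M+M. f $ k * cnj (col B j $ k))"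
      unfolding hinner_def df by simp
    also have "\<dots> = (\<Sum>k<M. f $ k * cnj (c * A $$ (k,j))) + (\<Sum>k<M. f $ (M+k) * cnj (c * A $$ (k,j)))"
      unfolding sum_split_add using A j
      by (simp add: B_def col_def index_mat_four_block)
    also have "\<dots> = cnj c * hinner (u+v) (col A j)"
      unfolding hinner_def u_def v_def using A j
      by (simp add: sum_distrib_left sum.distrib[symmetric] algebra_simps)
    finally show ?thesis .
  qed
  have c2: "hinner f (col B (N+j)) = cnj c * hinner (u-v) (col A j)" if j: "j < N" for j
  proof -
    have "hinner f (col B (N+j)) = (\<Sum>k<M+M. f $ k * cnj (col B (N+j) $ k))"
      unfolding hinner_def df by simp
    also have "\<dots> = (\<Sum>k<M. f $ k * cnj (c * A $$ (k,j))) - (\<Sum>k<M. f $ (M+k) * cnj (c * A $$ (k,j)))"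
      unfolding sum_split_add using A j
      by (simp add: B_def col_def index_mat_four_block sum_negf[symmetric])
    also have "\<dots> = cnj c * hinner (u-v) (col A j)"
      unfolding hinner_def u_def v_def using A j
      by (simp add: sum_distrib_left sum_subtractf[symmetric] algebra_simps)
    finally show ?thesis .
  qed
  show "frame_sum B f = (cmod c)^2 * (frame_sum A (u+v) + frame_sum A (u-v))"
    unfolding frame_sum_def dB sum_split_add using A
    by (simp add: c1 c2 cmod_cnj_mult_sq sum_distrib_left distrib_left)
qed

lemma colnorm:
  fixes A :: "complex mat" and c :: complex
  assumes A: "A \<in> carrier_mat M N" and i: "i < N + N"
  defines "B \<equiv> four_block_mat (c \<cdot>\<^sub>m A) (c \<cdot>\<^sub>m A) (c \<cdot>\<^sub>m A) (- (c \<cdot>\<^sub>m A))"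
  shows "hnorm_sq (col B i) = 2 * (cmod c)^2 * hnorm_sq (col A (if i < N then i else i - N))"
proof -
  let ?j = "if i < N then i else i - N"
  have j: "?j < N" using i by auto
  have "hnorm_sq (col B i) = (\<Sum>k<M+M. (cmod (col B i $ k))^2)"
    unfolding hnorm_sq_def using A by (simp add: B_def)
  also have "\<dots> = (\<Sum>k<M. (cmod (c * A $$ (k, ?j)))^2) + (\<Sum>k<M. (cmod (c * A $$ (k, ?j)))^2)"
    unfolding sum_split_add using A i
    by (auto simp: B_def col_def index_mat_four_block)
  also have "\<dots> = 2 * (cmod c)^2 * hnorm_sq (col A ?j)"
    unfolding hnorm_sq_def using A j
    by (simp add: norm_mult power_mult_distrib sum_distrib_left mult.assoc)
  finally show ?thesis .
qed

theorem proposition3p3: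
  fixes A :: "complex mat" and c :: complex and M N :: nat
  assumes "A \<in> carrier_mat M N" and "is_frame A" and "c \<noteq> 0"
  defines "B \<equiv> four_block_mat (c \<cdot>\<^sub>m A) (c \<cdot>\<^sub>m A) (c \<cdot>\<^sub>m A) (- (c \<cdot>\<^sub>m A))"
  shows "B \<in> carrier_mat (2 * M) (2 * N) \<and> is_frame B
     \<and> (is_tight_frame A \<longrightarrow> is_tight_frame B)
     \<and> (is_equal_norm_frame A \<longrightarrow> is_equal_norm_frame B)"
proof -
  note A = assms(1)
  have Bc: "B \<in> carrier_mat (2 * M) (2 * N)" using A by (auto simp: B_def)
  have dB: "dim_row B = 2 * M" "dim_col B = N + N" using Bc by auto
  have c2: "(cmod c)^2 > 0" using assms(3) by simp
  define U where "U f = vec M (\<lambda>k. f $ k)" for f :: "complex vec"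
  define V where "V f = vec M (\<lambda>k. f $ (M+k))" for f :: "complex vec"
  have K: "hnorm_sq f = hnorm_sq (U f) + hnorm_sq (V f)"
       "frame_sum B f = (cmod c)^2 * (frame_sum A (U f + V f) + frame_sum A (U f - V f))"
       "hnorm_sq (U f + V f) + hnorm_sq (U f - V f) = 2 * hnorm_sq f"
       "U f + V f \<in> carrier_vec (dim_row A)" "U f - V f \<in> carrier_vec (dim_row A)"
    if "f \<in> carrier_vec (dim_row B)" for f
  proof -
    have f2: "f \<in> carrier_vec (2*M)" using that dB by simp
    show "hnorm_sq f = hnorm_sq (U f) + hnorm_sq (V f)"
      using key(1)[OF A f2] unfolding U_def V_def .
    show "frame_sum B f = (cmod c)^2 * (frame_sum A (U f + V f) + frame_sum A (U f - V f))"
      using key(2)[OF A f2, where c=c] unfolding U_def V_def B_def .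
    show "hnorm_sq (U f + V f) + hnorm_sq (U f - V f) = 2 * hnorm_sq f"
      using key(3)[OF A f2] unfolding U_def V_def .
    show "U f + V f \<in> carrier_vec (dim_row A)" "U f - V f \<in> carrier_vec (dim_row A)"
      using A by (auto simp: U_def V_def)
  qed
  have fr: "is_frame B"
  proof -
    obtain a b where ab: "0 < a" "a \<le> b" and
      H: "\<And>f. f \<in> carrier_vec (dim_row A) \<Longrightarrow> a * hnorm_sq f \<le> frame_sum A f \<and> frame_sum A f \<le> b * hnorm_sq f"
      using assms(2) unfolding is_frame_def by blast
    show ?thesis unfolding is_frame_def
    proof (intro exI conjI ballI)
      show "0 < 2 * (cmod c)^2 * a" using ab c2 by simp
      show "2 * (cmod c)^2 * a \<le> 2 * (cmod c)^2 * b" using ab c2 by simp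
    next
      fix f :: "complex vec" assume f: "f \<in> carrier_vec (dim_row B)"
      note k = K[OF f]
      have s1: "a * (hnorm_sq (U f + V f) + hnorm_sq (U f - V f)) \<le> frame_sum A (U f + V f) + frame_sum A (U f - V f)"
        using H[OF k(4)] H[OF k(5)] by (simp add: distrib_left)
      have s2: "frame_sum A (U f + V f) + frame_sum A (U f - V f) \<le> b * (hnorm_sq (U f + V f) + hnorm_sq (U f - V f))"
        using H[OF k(4)] H[OF k(5)] by (simp add: distrib_left)
      show "2 * (cmod c)^2 * a * hnorm_sq f \<le> frame_sum B f"
        using mult_left_mono[OF s1, of "(cmod c)^2"] c2 unfolding k(2) k(3) by (simp add: algebra_simps)
      show "frame_sum B f \<le> 2 * (cmod c)^2 * b * hnorm_sq f"
        using mult_left_mono[OF s2, of "(cmod c)^2"] c2 unfolding k(2) k(3) by (simp add: algebra_simps)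
    qed
  qed
  have ti: "is_tight_frame B" if tA: "is_tight_frame A"
  proof -
    obtain a where a: "0 < a" and
      H: "\<And>f. f \<in> carrier_vec (dim_row A) \<Longrightarrow> frame_sum A f = a * hnorm_sq f"
      using tA unfolding is_tight_frame_def by blast
    show ?thesis unfolding is_tight_frame_def
    proof (intro exI conjI ballI)
      show "0 < 2 * (cmod c)^2 * a" using a c2 by simp
    next
      fix f :: "complex vec" assume f: "f \<in> carrier_vec (dim_row B)"
      note k = K[OF f]
      show "frame_sum B f = 2 * (cmod c)^2 * a * hnorm_sq f"
        unfolding k(2) H[OF k(4)] H[OF k(5)] using k(3) by (simp add: algebra_simps flip: distrib_left)
    qed
  qed
  have en: "is_equal_norm_frame B" if eA: "is_equal_norm_frame A"
  proof -
    obtain r where r: "\<And>i. i < dim_col A \<Longrightarrow> hnorm_sq (col A i) = r"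
      using eA unfolding is_equal_norm_frame_def by blast
    have "\<forall>i<dim_col B. hnorm_sq (col B i) = 2 * (cmod c)^2 * r"
    proof (intro allI impI)
      fix i assume i: "i < dim_col B"
      hence i': "i < N + N" using dB by simp
      show "hnorm_sq (col B i) = 2 * (cmod c)^2 * r"
        using colnorm[OF A i', of c] r[of "if i < N then i else i - N"] A i'
        unfolding B_def by (auto split: if_splits)
    qed
    thus ?thesis unfolding is_equal_norm_frame_def using fr by blast
  qed
  show ?thesis using Bc fr ti en by blast
qed

end
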